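(* Let $1\le k\le n$ and let $t$ be an integer with $0\le t\le (k-1)(n-k)$ (the number of $-1$ entries of $F_n^k$). Then there exist an $n\times n$ ASM $A_k$ with exactly $t$ entries equal to $-1$ and $n\times n$ permutation matrices $P_1,\ldots,P_{k-1},P_{k+1},\ldots,P_n$ such that $[P_1,\ldots,P_{k-1},A_k,P_{k+1},\ldots,P_n]$ is an $n\times n\times n$ ASHM.
   Context: An $n\times n$ alternating sign matrix (ASM) is an $n\times n$ matrix with entries in $\{0,1,-1\}$ such that in every row and column the nonzeros alternate in sign, beginning and ending with $+1$. An $n\times n\times n$ hypermatrix $[A_1,\ldots,A_n]$ ($A_s$ the horizontal planes) is an ASHM if all entries are in $\{0,\pm1\}$ and in every line (obtained by fixing two of the three indices) the nonzeros alternate in sign beginning and ending with $+1$. For $1\le k\le n$, $F_n^k=[f_{ij}]$ is the $n\times n$ matrix with $f_{ij}=(-1)^{i+j+k+1}$ if $k+1\le i+j\le 2n+1-k$ and $|i-j|\le k-1$, and $f_{ij}=0$ otherwise; it is an ASM with $(k-1)(n-k)$ entries equal to $-1$. *)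

theory Defs
  imports Main
begin

text \<open>Indices are 0-based: an n x n matrix is a function nat => nat => int,
  only entries with indices < n matter. An n x n x n hypermatrix is
  H :: nat => nat => nat => int, where H s is the s-th horizontal plane A_s.\<close>

definition alt_sign_seq :: "int list \<Rightarrow> bool" where
  "alt_sign_seq xs \<longleftrightarrow>
     (let ys = filter (\<lambda>x. x \<noteq> 0) xs in
        ys \<noteq> [] \<and> odd (length ys) \<and> (\<forall>i < length ys. ys ! i = (-1) ^ i))"

definition is_ASM :: "nat \<Rightarrow> (nat \<Rightarrow> nat \<Rightarrow> int) \<Rightarrow> bool" where
  "is_ASM n A \<longleftrightarrow>
     (\<forall>i < n. \<forall>j < n. A i j \<in> {-1, 0, 1}) \<and>
     (\<forall>i < n. alt_sign_seq (map (\<lambda>j. A i j) [0..<n])) \<and>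
     (\<forall>j < n. alt_sign_seq (map (\<lambda>i. A i j) [0..<n]))"

definition is_perm_matrix :: "nat \<Rightarrow> (nat \<Rightarrow> nat \<Rightarrow> int) \<Rightarrow> bool" where
  "is_perm_matrix n P \<longleftrightarrow>
     (\<forall>i < n. \<forall>j < n. P i j \<in> {0, 1}) \<and>
     (\<forall>i < n. card {j. j < n \<and> P i j = 1} = 1) \<and>
     (\<forall>j < n. card {i. i < n \<and> P i j = 1} = 1)"

definition is_ASHM :: "nat \<Rightarrow> (nat \<Rightarrow> nat \<Rightarrow> nat \<Rightarrow> int) \<Rightarrow> bool" where
  "is_ASHM n H \<longleftrightarrow>
     (\<forall>s < n. \<forall>i < n. \<forall>j < n. H s i j \<in> {-1, 0, 1}) \<and>
     (\<forall>s < n. \<forall>i < n. alt_sign_seq (map (\<lambda>j. H s i j) [0..<n])) \<and>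
     (\<forall>s < n. \<forall>j < n. alt_sign_seq (map (\<lambda>i. H s i j) [0..<n])) \<and>
     (\<forall>i < n. \<forall>j < n. alt_sign_seq (map (\<lambda>s. H s i j) [0..<n]))"

definition num_neg_ones :: "nat \<Rightarrow> (nat \<Rightarrow> nat \<Rightarrow> int) \<Rightarrow> nat" where
  "num_neg_ones n A = card {(i, j). i < n \<and> j < n \<and> A i j = -1}"

end

theory Submission
  imports Defs
begin


lemma alt_sign_seq_filterI:
  assumes "filter (\<lambda>x. x \<noteq> 0) xs = ys" "ys \<noteq> []" "odd (length ys)" "\<forall>i<length ys. ys ! i = (-1) ^ i"
  shows "alt_sign_seq xs"
  using assms unfolding alt_sign_seq_def Let_def by simp

lemma filter_nz_01:
  assumes "set xs \<subseteq> {0, 1::int}"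
  shows "filter (\<lambda>x. x \<noteq> 0) xs = replicate (nat (sum_list xs)) 1"
  using assms
proof (induction xs)
  case Nil then show ?case by simp
next
  case (Cons x xs)
  have s: "sum_list xs \<ge> 0" using Cons.prems by (intro sum_list_nonneg) auto
  show ?case
  proof (cases "x = 0")
    case True then show ?thesis using Cons by simp
  next
    case False
    then have "x = 1" using Cons.prems by auto
    then show ?thesis using Cons s by (simp add: nat_add_distrib)
  qed
qed

lemma alt_interval:
  fixes f :: "nat \<Rightarrow> int"
  assumes "lo \<le> hi" "hi < n" "even (hi + lo)"
    and f: "\<And>j. j < n \<Longrightarrow> f j = (if lo \<le> j \<and> j \<le> hi then (if even (j + lo) then 1 else -1) else 0)"
  shows "alt_sign_seq (map f [0..<n])"
proof -
  have s1: "[0..<n] = [0..<lo] @ [lo..<n]" using upt_add_eq_append[of 0 lo "n-lo"] assms by simp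
  have s2: "[lo..<n] = [lo..<Suc hi] @ [Suc hi..<n]" using upt_add_eq_append[of lo "Suc hi" "n - Suc hi"] assms by simp
  have split: "[0..<n] = [0..<lo] @ [lo..<Suc hi] @ [Suc hi..<n]" using s1 s2 by simp
  have f1: "filter (\<lambda>x. x \<noteq> 0) (map f [0..<lo]) = []"
    using assms(1,2) by (auto simp: filter_empty_conv f)
  have f3: "filter (\<lambda>x. x \<noteq> 0) (map f [Suc hi..<n]) = []"
    by (auto simp: filter_empty_conv f)
  have m: "map f [lo..<Suc hi] = map (\<lambda>x. (-1)^x) [0..<Suc hi - lo]"
  proof (rule nth_equalityI)
    fix i assume "i < length (map f [lo..<Suc hi])"
    then have i: "i < Suc hi - lo" by (simp del: upt_Suc)
    then have "f (lo + i) = (-1) ^ i" using assms by (subst f) (auto simp: minus_one_power_iff)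
    then show "map f [lo..<Suc hi] ! i = map (\<lambda>x. (-1)^x) [0..<Suc hi - lo] ! i"
      using i by (simp add: nth_upt del: upt_Suc)
  qed (simp del: upt_Suc)
  have f2: "filter (\<lambda>x. x \<noteq> 0) (map f [lo..<Suc hi]) = map (\<lambda>x. (-1)^x) [0..<Suc hi - lo]"
    unfolding m by (auto simp: filter_id_conv simp del: upt_Suc)
  show ?thesis
    apply (rule alt_sign_seq_filterI[where ys="map (\<lambda>x. (-1)^x) [0..<Suc hi - lo]"])
    using f1 f2 f3 assms(1,3) by (auto simp: split simp del: upt_Suc)
qed

lemma alt_head_interval:
  fixes f :: "nat \<Rightarrow> int"
  assumes "1 \<le> c" "c \<le> hi" "hi < n" "odd (hi + c)"
    and f: "\<And>j. j < n \<Longrightarrow> f j = (if j = 0 then 1 else if c \<le> j \<and> j \<le> hi then (if even (j + c) then -1 else 1) else 0)"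
  shows "alt_sign_seq (map f [0..<n])"
proof -
  have s1: "[0..<n] = [0..<1] @ [1..<n]" using upt_add_eq_append[of 0 1 "n-1"] assms by simp
  have s1': "[1..<n] = [1..<c] @ [c..<n]" using upt_add_eq_append[of 1 c "n-c"] assms by simp
  have s2: "[c..<n] = [c..<Suc hi] @ [Suc hi..<n]" using upt_add_eq_append[of c "Suc hi" "n - Suc hi"] assms by simp
  have split: "[0..<n] = [0] @ [1..<c] @ [c..<Suc hi] @ [Suc hi..<n]" using s1 s1' s2 by simp
  have f0: "f 0 = 1" using f assms by auto
  have f1: "filter (\<lambda>x. x \<noteq> 0) (map f [1..<c]) = []"
    using assms by (auto simp: filter_empty_conv f)
  have f3: "filter (\<lambda>x. x \<noteq> 0) (map f [Suc hi..<n]) = []"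
    by (auto simp: filter_empty_conv f)
  have m: "map f [c..<Suc hi] = map (\<lambda>x. (-1)^(Suc x)) [0..<Suc hi - c]"
  proof (rule nth_equalityI)
    fix i assume "i < length (map f [c..<Suc hi])"
    then have i: "i < Suc hi - c" by (simp del: upt_Suc)
    then have "f (c + i) = (-1) ^ (Suc i)" using assms by (subst f) (auto simp: minus_one_power_iff)
    then show "map f [c..<Suc hi] ! i = map (\<lambda>x. (-1)^(Suc x)) [0..<Suc hi - c] ! i"
      using i by (simp add: nth_upt del: upt_Suc power_Suc)
  qed (simp del: upt_Suc)
  have f2: "filter (\<lambda>x. x \<noteq> 0) (map f [c..<Suc hi]) = map (\<lambda>x. (-1)^(Suc x)) [0..<Suc hi - c]"
    unfolding m by (auto simp: filter_id_conv simp del: upt_Suc power_Suc)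
  have ys: "1 # map (\<lambda>x. (-1::int)^(Suc x)) [0..<Suc hi - c] = map (\<lambda>x. (-1)^x) [0..<Suc (Suc hi - c)]"
    by (simp add: map_Suc_upt[symmetric] upt_conv_Cons del: upt_Suc power_Suc)
  show ?thesis
    apply (rule alt_sign_seq_filterI[where ys="map (\<lambda>x. (-1)^x) [0..<Suc (Suc hi - c)]"])
    using f0 f1 f2 f3 assms(1-4) ys
    by (auto simp: split simp del: upt_Suc power_Suc)
qed

lemma nth_alt_sum:
  "sum_list (map (\<lambda>x. (-1::int)^x) [0..<m]) = (if even m then 0 else 1)"
  by (induction m) auto

lemma alt_sum_list:
  assumes "alt_sign_seq xs" shows "sum_list xs = 1"
proof -
  let ?ys = "filter (\<lambda>x. x \<noteq> 0) xs"
  have a: "odd (length ?ys)" "\<forall>i<length ?ys. ?ys ! i = (-1)^i"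
    using assms unfolding alt_sign_seq_def Let_def by auto
  have "?ys = map (\<lambda>x. (-1::int)^x) [0..<length ?ys]"
    by (rule nth_equalityI) (use a in auto)
  then have "sum_list ?ys = 1" using a(1) nth_alt_sum by metis
  moreover have "sum_list ?ys = sum_list xs" by (induction xs) auto
  ultimately show ?thesis by simp
qed




definition famA :: "nat \<Rightarrow> nat \<Rightarrow> nat \<Rightarrow> nat \<Rightarrow> nat \<Rightarrow> int" where
  "famA n w d i j = (if i = 0 \<and> j = w + d then 1
     else if w \<le> i + j \<and> i + j + w + 2 \<le> 2 * n \<and> j \<le> i + w \<and> i \<le> j + w
             \<and> \<not> (i + w \<le> j + 1 \<and> i + j \<le> 2 * d + w)
          then (if even (i + j + w) then 1 else -1) else 0)"

lemma even_shift: "(x::nat) = y + 2 * z \<Longrightarrow> even x \<longleftrightarrow> even y" by simp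

lemma famA_row:
  assumes "2 * w + d < n" "0 < d \<longrightarrow> 0 < w" "1 \<le> i" "i < n" "j < n"
  defines "lo \<equiv> (if i \<le> w then w - i else i - w)"
  defines "hi \<equiv> (if i \<le> d then i + w - 2 else min (2*n - 2 - w - i) (i + w))"
  shows "famA n w d i j = (if lo \<le> j \<and> j \<le> hi then (if even (j + lo) then 1 else -1) else 0)"
proof -
  have c: "(w \<le> i + j \<and> i + j + w + 2 \<le> 2 * n \<and> j \<le> i + w \<and> i \<le> j + w
             \<and> \<not> (i + w \<le> j + 1 \<and> i + j \<le> 2 * d + w)) \<longleftrightarrow> lo \<le> j \<and> j \<le> hi"
    using assms(1-5) unfolding lo_def hi_def by (auto split: if_split_asm)
  have p: "even (i + j + w) \<longleftrightarrow> even (j + lo)"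
  proof (cases "i \<le> w")
    case True then show ?thesis unfolding lo_def by (intro even_shift[where z=i]) simp
  next
    case False then show ?thesis unfolding lo_def by (intro even_shift[where z=w]) simp
  qed
  show ?thesis using c p assms(3) unfolding famA_def by auto
qed

lemma famA_row0:
  assumes "2 * w + d < n" "j < n"
  shows "famA n w d 0 j = (if j = w + d then 1 else 0)"
  using assms unfolding famA_def by auto

lemma famA_col:
  assumes "2 * w + d < n" "0 < d \<longrightarrow> 0 < w" "i < n" "j < n" "\<not> (j = w + d \<and> 0 < d)"
  defines "lo \<equiv> (if w \<le> j \<and> j < w + d then j - w + 2 else if j \<le> w then w - j else j - w)"
  defines "hi \<equiv> min (2*n - 2 - w - j) (j + w)"
  shows "famA n w d i j = (if lo \<le> i \<and> i \<le> hi then (if even (i + lo) then 1 else -1) else 0)"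
proof -
  have c: "(\<not> (i = 0 \<and> j = w + d)) \<Longrightarrow> (w \<le> i + j \<and> i + j + w + 2 \<le> 2 * n \<and> j \<le> i + w \<and> i \<le> j + w
             \<and> \<not> (i + w \<le> j + 1 \<and> i + j \<le> 2 * d + w)) \<longleftrightarrow> lo \<le> i \<and> i \<le> hi"
    using assms(1-5) unfolding lo_def hi_def by (auto split: if_split_asm)
  have p: "even (i + j + w) \<longleftrightarrow> even (i + lo)"
  proof (cases "w \<le> j \<and> j < w + d")
    case True then have "0 < w" using assms(2) by auto
    then show ?thesis using True unfolding lo_def by (intro even_shift[where z="w - 1"]) auto
  next
    case False
    show ?thesis
    proof (cases "j \<le> w")
      case True then show ?thesis using False unfolding lo_def by (intro even_shift[where z=j]) simp
    next
      case False2: False then show ?thesis using False unfolding lo_def by (intro even_shift[where z=w]) simp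
    qed
  qed
  show ?thesis
  proof (cases "i = 0 \<and> j = w + d")
    case True
    then have "d = 0" using assms(5) by auto
    then show ?thesis using True assms(1,4) unfolding famA_def lo_def hi_def by auto
  next
    case False
    then show ?thesis using c p unfolding famA_def by auto
  qed
qed

lemma famA_col_special:
  assumes "2 * w + d < n" "0 < d" "i < n"
  defines "hi \<equiv> min (2*n - 2 - w - (w + d)) ((w + d) + w)"
  shows "famA n w d i (w + d) = (if i = 0 then 1 else if Suc d \<le> i \<and> i \<le> hi then (if even (i + Suc d) then -1 else 1) else 0)"
proof -
  have c: "i \<noteq> 0 \<Longrightarrow> (w \<le> i + (w + d) \<and> i + (w + d) + w + 2 \<le> 2 * n \<and> (w + d) \<le> i + w \<and> i \<le> (w + d) + w
             \<and> \<not> (i + w \<le> (w + d) + 1 \<and> i + (w + d) \<le> 2 * d + w)) \<longleftrightarrow> Suc d \<le> i \<and> i \<le> hi"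
    using assms unfolding hi_def by auto
  have p: "even (i + (w + d) + w) \<longleftrightarrow> \<not> even (i + Suc d)"
    by (subst even_shift[where y="i+d" and z=w]) auto
  show ?thesis using c p unfolding famA_def by auto
qed




lemma evenI: "(x::nat) = 2 * z \<Longrightarrow> even x" by simp
lemma oddI: "(x::nat) = 2 * z + 1 \<Longrightarrow> odd x" by simp

lemma row_par:
  fixes w d n i :: nat
  assumes n: "2 * w + d < n" and dw: "0 < d \<longrightarrow> 0 < w" and i: "i < n" "i \<noteq> 0"
  shows "even ((if i \<le> d then i + w - 2 else min (2*n - 2 - w - i) (i + w)) + (if i \<le> w then w - i else i - w))"
    (is "even ?X")
proof (cases "i \<le> d")
  case True
  then have "0 < d" using i by auto
  then have w: "0 < w" using dw by auto
  show ?thesis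
  proof (cases "i \<le> w")
    case True2: True
    have "?X = 2 * (w - 1)" using True True2 w i by simp
    then show ?thesis by simp
  next
    case False2: False
    have "?X = 2 * (i - 1)" using True False2 w i by simp
    then show ?thesis by simp
  qed
next
  case False
  show ?thesis
  proof (cases "2*n - 2 - w - i \<le> i + w")
    case True
    show ?thesis
    proof (cases "i \<le> w")
      case True2: True
      have "?X = 2 * (n - 1 - i)" using True True2 False n i by simp
      then show ?thesis by simp
    next
      case False2: False
      have "?X = 2 * (n - 1 - w)" using True False2 False n i by simp
      then show ?thesis by simp
    qed
  next
    case False3: False
    show ?thesis
    proof (cases "i \<le> w")
      case True2: True
      have "?X = 2 * w" using False3 True2 False n i by simp
      then show ?thesis by simp
    next
      case False2: False
      have "?X = 2 * i" using False3 False2 False n i by simp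
      then show ?thesis by simp
    qed
  qed
qed

lemma col_par:
  fixes w d n j :: nat
  assumes n: "2 * w + d < n" and dw: "0 < d \<longrightarrow> 0 < w" and j: "j < n"
  shows "even (min (2*n - 2 - w - j) (j + w) + (if w \<le> j \<and> j < w + d then j - w + 2 else if j \<le> w then w - j else j - w))"
    (is "even ?X")
proof (cases "w \<le> j \<and> j < w + d")
  case True
  then have w: "0 < w" using dw by auto
  show ?thesis
  proof (cases "2*n - 2 - w - j \<le> j + w")
    case T2: True
    have "?X = 2 * (n - w)" using True T2 w n j by simp
    then show ?thesis by simp
  next
    case F2: False
    have "?X = 2 * (j + 1)" using True F2 w n j by simp
    then show ?thesis by simp
  qed
next
  case F: False
  show ?thesis
  proof (cases "j \<le> w")
    case True
    show ?thesis
    proof (cases "2*n - 2 - w - j \<le> j + w")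
      case T2: True
      have "?X = 2 * (n - 1 - j)" using F True T2 n j by simp
      then show ?thesis by simp
    next
      case F2: False
      have "?X = 2 * w" using F True F2 n j by simp
      then show ?thesis by simp
    qed
  next
    case False
    show ?thesis
    proof (cases "2*n - 2 - w - j \<le> j + w")
      case T2: True
      have "?X = 2 * (n - 1 - w)" using F False T2 n j by simp
      then show ?thesis by simp
    next
      case F2: False
      have "?X = 2 * j" using F False F2 n j by simp
      then show ?thesis by simp
    qed
  qed
qed

lemma famA_ASM:
  assumes n: "2 * w + d < n" and dw: "0 < d \<longrightarrow> 0 < w"
  shows "is_ASM n (famA n w d)"
  unfolding is_ASM_def
proof (intro conjI allI impI)
  fix i j assume "i < n" "j < n"
  show "famA n w d i j \<in> {-1, 0, 1}" unfolding famA_def by auto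
next
  fix i assume i: "i < n"
  show "alt_sign_seq (map (famA n w d i) [0..<n])"
  proof (cases "i = 0")
    case True
    show ?thesis
      by (rule alt_interval[where lo="w+d" and hi="w+d"]) (use n True famA_row0[OF n] in auto)
  next
    case False
    define lo where "lo \<equiv> (if i \<le> w then w - i else i - w)"
    define hi where "hi \<equiv> (if i \<le> d then i + w - 2 else min (2*n - 2 - w - i) (i + w))"
    have 1: "lo \<le> hi" "hi < n" using n dw False i unfolding lo_def hi_def by auto
    have 2: "even (hi + lo)" unfolding lo_def hi_def using row_par[OF n dw i False] by simp
    show ?thesis
      by (rule alt_interval[where lo=lo and hi=hi]) (use 1 2 famA_row[OF n dw] False i in \<open>auto simp: lo_def hi_def\<close>)
  qed
next
  fix j assume j: "j < n"
  show "alt_sign_seq (map (\<lambda>i. famA n w d i j) [0..<n])"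
  proof (cases "j = w + d \<and> 0 < d")
    case True
    define hi where "hi \<equiv> min (2*n - 2 - w - (w + d)) ((w + d) + w)"
    have 1: "Suc d \<le> hi" "hi < n" using n dw True unfolding hi_def by auto
    have 2: "odd (hi + Suc d)"
    proof (cases "2*n - 2 - w - (w + d) \<le> (w + d) + w")
      case True then have "hi = 2*n - 2 - w - (w + d)" unfolding hi_def by simp
      then show ?thesis using n by (intro oddI[where z="n - 1 - w"]) arith
    next
      case False then have "hi = (w + d) + w" unfolding hi_def by simp
      then show ?thesis using n by (intro oddI[where z="w + d"]) arith
    qed
    show ?thesis
      by (rule alt_head_interval[where c="Suc d" and hi=hi]) (use 1 2 True famA_col_special[OF n] in \<open>auto simp: hi_def\<close>)
  next
    case False
    define lo where "lo \<equiv> (if w \<le> j \<and> j < w + d then j - w + 2 else if j \<le> w then w - j else j - w)"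
    define hi where "hi \<equiv> min (2*n - 2 - w - j) (j + w)"
    have 1: "lo \<le> hi" "hi < n" using n dw j unfolding lo_def hi_def by auto
    have 2: "even (hi + lo)" unfolding lo_def hi_def using col_par[OF n dw j] by simp
    show ?thesis
      by (rule alt_interval[where lo=lo and hi=hi]) (use 1 2 famA_col[OF n dw] False j in \<open>auto simp: lo_def hi_def\<close>)
  qed
qed




lemma hall:
  fixes I :: "'a set" and S :: "'a \<Rightarrow> 'b set"
  assumes "finite I" "\<forall>i\<in>I. finite (S i)" "\<forall>J\<subseteq>I. card J \<le> card (\<Union>(S ` J))"
  shows "\<exists>f. inj_on f I \<and> (\<forall>i\<in>I. f i \<in> S i)"
  using assms
proof (induction "card I" arbitrary: I S rule: less_induct)
  case less
  note fin = less.prems(1) and finS = less.prems(2) and H = less.prems(3)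
  show ?case
  proof (cases "I = {}")
    case True then show ?thesis by auto
  next
    case False
    show ?thesis
    proof (cases "\<exists>J. J \<subseteq> I \<and> J \<noteq> {} \<and> J \<noteq> I \<and> card (\<Union>(S ` J)) = card J")
      case True
      then obtain J where J: "J \<subseteq> I" "J \<noteq> {}" "J \<noteq> I" "card (\<Union>(S ` J)) = card J" by blast
      define T where "T = \<Union>(S ` J)"
      have fJ: "finite J" using J fin by (meson finite_subset)
      have fT: "finite T" unfolding T_def using fJ finS J by auto
      have cJ: "card J < card I" using J fin by (meson psubsetI psubset_card_mono)
      obtain f1 where f1: "inj_on f1 J" "\<forall>i\<in>J. f1 i \<in> S i"
      proof -
        have "\<forall>i\<in>J. finite (S i)" using finS J by auto
        moreover have "\<forall>K\<subseteq>J. card K \<le> card (\<Union>(S ` K))" using H J by auto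
        ultimately show ?thesis using less.hyps[OF cJ fJ] that by blast
      qed
      define S2 where "S2 i = S i - T" for i
      have cIJ: "card (I - J) < card I"
      proof -
        have "card (I - J) = card I - card J" using J fJ by (simp add: card_Diff_subset)
        moreover have "0 < card J" using J fJ by auto
        moreover have "card J \<le> card I" using J fin by (simp add: card_mono)
        ultimately show ?thesis by linarith
      qed
      have H2: "\<forall>K\<subseteq>I - J. card K \<le> card (\<Union>(S2 ` K))"
      proof (intro allI impI)
        fix K assume K: "K \<subseteq> I - J"
        have fK: "finite K" using K fin by (meson finite_subset Diff_subset)
        have U: "\<Union>(S ` (K \<union> J)) = (\<Union>(S2 ` K)) \<union> T" unfolding S2_def T_def by auto
        have D: "(\<Union>(S2 ` K)) \<inter> T = {}" unfolding S2_def by auto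
        have fU: "finite (\<Union>(S2 ` K))" unfolding S2_def using fK finS K by auto
        have "K \<union> J \<subseteq> I" using K J by auto
        then have "card (K \<union> J) \<le> card (\<Union>(S ` (K \<union> J)))" using H by blast
        also have "\<dots> = card (\<Union>(S2 ` K)) + card T" unfolding U using D fU fT by (simp add: card_Un_disjoint)
        finally have "card (K \<union> J) \<le> card (\<Union>(S2 ` K)) + card T" .
        moreover have "card (K \<union> J) = card K + card J" using K fK fJ by (subst card_Un_disjoint) auto
        ultimately show "card K \<le> card (\<Union>(S2 ` K))" using J(4) unfolding T_def by simp
      qed
      obtain f2 where f2: "inj_on f2 (I - J)" "\<forall>i\<in>I - J. f2 i \<in> S2 i"
        using less.hyps[OF cIJ _ _ H2] fin finS unfolding S2_def by auto
      define f where "f i = (if i \<in> J then f1 i else f2 i)" for i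
      have "inj_on f I"
      proof (rule inj_onI)
        fix x y assume xy: "x \<in> I" "y \<in> I" "f x = f y"
        show "x = y"
        proof (cases "x \<in> J"; cases "y \<in> J")
          assume "x \<in> J" "y \<in> J" then show ?thesis using xy f1 unfolding f_def by (auto dest: inj_onD)
        next
          assume a: "x \<in> J" "y \<notin> J"
          have "f x \<in> T" using f1 a unfolding f_def T_def by auto
          moreover have "f y \<notin> T" using f2 a xy(1,2) unfolding f_def S2_def by auto
          ultimately show ?thesis using xy by simp
        next
          assume a: "x \<notin> J" "y \<in> J"
          have "f y \<in> T" using f1 a unfolding f_def T_def by auto
          moreover have "f x \<notin> T" using f2 a xy(1,2) unfolding f_def S2_def by auto
          ultimately show ?thesis using xy by simp
        next
          assume "x \<notin> J" "y \<notin> J" then show ?thesis using xy f2 unfolding f_def by (auto dest: inj_onD)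
        qed
      qed
      moreover have "\<forall>i\<in>I. f i \<in> S i" using f1 f2 unfolding f_def S2_def by auto
      ultimately show ?thesis by blast
    next
      case False2: False
      obtain i0 where i0: "i0 \<in> I" using False by auto
      have "card {i0} \<le> card (\<Union>(S ` {i0}))" using H i0 by blast
      then have "card {i0} \<le> card (S i0)" by simp
      then have "S i0 \<noteq> {}" using finS i0 by auto
      then obtain x where x: "x \<in> S i0" by auto
      define S2 where "S2 i = S i - {x}" for i
      have cI': "card (I - {i0}) < card I" using i0 fin by (meson card_Diff1_less)
      have H2: "\<forall>K\<subseteq>I - {i0}. card K \<le> card (\<Union>(S2 ` K))"
      proof (intro allI impI)
        fix K assume K: "K \<subseteq> I - {i0}"
        show "card K \<le> card (\<Union>(S2 ` K))"
        proof (cases "K = {}")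
          case True then show ?thesis by simp
        next
          case Kne: False
          have fK: "finite K" using K fin by (meson Diff_subset finite_subset)
          have fU: "finite (\<Union>(S ` K))" using K fK finS by auto
          have "K \<noteq> I" using K i0 by auto
          then have "card (\<Union>(S ` K)) \<noteq> card K" using False2 K Kne by blast
          moreover have "card K \<le> card (\<Union>(S ` K))" using H K by auto
          ultimately have "card K + 1 \<le> card (\<Union>(S ` K))" by simp
          moreover have "\<Union>(S2 ` K) = \<Union>(S ` K) - {x}" unfolding S2_def by auto
          moreover have "card (\<Union>(S ` K) - {x}) \<ge> card (\<Union>(S ` K)) - 1"
            using fU by (cases "x \<in> \<Union>(S ` K)") (auto simp: card_Diff_singleton)
          ultimately show ?thesis by simp
        qed
      qed
      obtain f2 where f2: "inj_on f2 (I - {i0})" "\<forall>i\<in>I - {i0}. f2 i \<in> S2 i"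
        using less.hyps[OF cI' _ _ H2] fin finS unfolding S2_def by auto
      define f where "f = f2(i0 := x)"
      have "inj_on f I"
      proof (rule inj_onI)
        fix a b assume ab: "a \<in> I" "b \<in> I" "f a = f b"
        show "a = b"
        proof (cases "a = i0"; cases "b = i0")
          assume "a \<noteq> i0" "b \<noteq> i0" then show ?thesis using ab f2 unfolding f_def by (auto dest: inj_onD)
        next
          assume "a = i0" "b \<noteq> i0" then show ?thesis using ab f2 unfolding f_def S2_def by auto
        next
          assume "a \<noteq> i0" "b = i0" then show ?thesis using ab f2 unfolding f_def S2_def by auto
        qed simp
      qed
      moreover have "\<forall>i\<in>I. f i \<in> S i" using f2 x unfolding f_def S2_def by auto
      ultimately show ?thesis by blast
    qed
  qed
qed


lemma regular_has_perm:
  fixes M :: "nat \<Rightarrow> nat \<Rightarrow> int"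
  assumes M01: "\<forall>i<n. \<forall>j<n. M i j \<in> {0,1}"
    and row: "\<forall>i<n. (\<Sum>j<n. M i j) = int r" and col: "\<forall>j<n. (\<Sum>i<n. M i j) = int r" and r: "0 < r"
  shows "\<exists>f. bij_betw f {..<n} {..<n} \<and> (\<forall>i<n. M i (f i) = 1)"
proof -
  define S where "S i = {j. j < n \<and> M i j = 1}" for i
  have nn: "\<And>i j. i < n \<Longrightarrow> j < n \<Longrightarrow> 0 \<le> M i j"
  proof -
    fix i j assume "i < n" "j < n"
    then have "M i j \<in> {0,1}" using M01 by auto
    then show "0 \<le> M i j" by auto
  qed
  have H: "\<forall>J\<subseteq>{..<n}. card J \<le> card (\<Union>(S ` J))"
  proof (intro allI impI)
    fix J assume J: "J \<subseteq> {..<n}"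
    define T where "T = \<Union>(S ` J)"
    have T: "T \<subseteq> {..<n}" unfolding T_def S_def by auto
    have fJ: "finite J" using J finite_subset by blast
    have fT: "finite T" using T finite_subset by blast
    have "(\<Sum>i\<in>J. \<Sum>j<n. M i j) = (\<Sum>i\<in>J. int r)" using row J by (intro sum.cong) auto
    then have "int r * int (card J) = (\<Sum>i\<in>J. \<Sum>j<n. M i j)" by simp
    also have "\<dots> = (\<Sum>i\<in>J. \<Sum>j\<in>T. M i j)"
    proof (rule sum.cong[OF refl])
      fix i assume i: "i \<in> J"
      have "(\<Sum>j<n. M i j) = (\<Sum>j\<in>T. M i j) + (\<Sum>j\<in>{..<n} - T. M i j)"
        using T by (metis add.commute finite_lessThan sum.subset_diff)
      moreover have "(\<Sum>j\<in>{..<n} - T. M i j) = 0"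
      proof (rule sum.neutral, intro ballI)
        fix j assume "j \<in> {..<n} - T"
        then have "j < n" "M i j \<noteq> 1" using i unfolding T_def S_def by auto
        then show "M i j = 0" using M01 i J by auto
      qed
      ultimately show "(\<Sum>j<n. M i j) = (\<Sum>j\<in>T. M i j)" by simp
    qed
    also have "\<dots> = (\<Sum>j\<in>T. \<Sum>i\<in>J. M i j)" by (rule sum.swap)
    also have "\<dots> \<le> (\<Sum>j\<in>T. \<Sum>i<n. M i j)"
    proof (rule sum_mono)
      fix j assume j: "j \<in> T"
      show "(\<Sum>i\<in>J. M i j) \<le> (\<Sum>i<n. M i j)"
        using J j T nn by (intro sum_mono2) auto
    qed
    also have "\<dots> = (\<Sum>j\<in>T. int r)" using col T by (intro sum.cong) auto
    also have "\<dots> = int r * int (card T)" by simp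
    finally have "int r * int (card J) \<le> int r * int (card T)" .
    then show "card J \<le> card (\<Union>(S ` J))" using r unfolding T_def by simp
  qed
  obtain f where f: "inj_on f {..<n}" "\<forall>i\<in>{..<n}. f i \<in> S i"
    using hall[of "{..<n}" S] H unfolding S_def by auto
  have img: "f ` {..<n} \<subseteq> {..<n}" using f unfolding S_def by auto
  have "f ` {..<n} = {..<n}"
    using img f(1) by (simp add: card_image card_subset_eq)
  then have "bij_betw f {..<n} {..<n}" using f(1) by (simp add: bij_betw_def)
  moreover have "\<forall>i<n. M i (f i) = 1" using f unfolding S_def by auto
  ultimately show ?thesis by blast
qed

lemma perm_of_bij:
  assumes "bij_betw f {..<n} {..<n}"
  shows "is_perm_matrix n (\<lambda>i j. if j = f i then 1 else 0)"
  unfolding is_perm_matrix_def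
proof (intro conjI allI impI)
  fix i j assume "i < n" "j < n" then show "(if j = f i then 1 else 0) \<in> {0, 1::int}" by auto
next
  fix i assume i: "i < n"
  then have "f i < n" using assms by (auto simp: bij_betw_def)
  then have "{j. j < n \<and> (if j = f i then 1 else 0) = (1::int)} = {f i}" by auto
  then show "card {j. j < n \<and> (if j = f i then 1 else 0) = (1::int)} = 1" by simp
next
  fix j assume j: "j < n"
  then have "j \<in> f ` {..<n}" using assms by (simp add: bij_betw_def)
  then obtain i0 where i0: "i0 < n" "f i0 = j" by auto
  have "{i. i < n \<and> (if j = f i then 1 else 0) = (1::int)} = {i0}"
    using i0 assms by (auto simp: bij_betw_def dest: inj_onD)
  then show "card {i. i < n \<and> (if j = f i then 1 else 0) = (1::int)} = 1" by simp
qed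

lemma birkhoff:
  fixes M :: "nat \<Rightarrow> nat \<Rightarrow> int"
  assumes "\<forall>i<n. \<forall>j<n. M i j \<in> {0,1}"
    and "\<forall>i<n. (\<Sum>j<n. M i j) = int r" and "\<forall>j<n. (\<Sum>i<n. M i j) = int r"
  shows "\<exists>Q. (\<forall>s<r. is_perm_matrix n (Q s)) \<and> (\<forall>i<n. \<forall>j<n. M i j = (\<Sum>s<r. Q s i j))"
  using assms
proof (induction r arbitrary: M)
  case 0
  have "\<forall>i<n. \<forall>j<n. M i j = 0"
  proof (intro allI impI)
    fix i j assume ij: "i < n" "j < n"
    have s0: "sum (M i) {..<n} = 0" using 0(2) ij by simp
    have nn: "\<And>x. x \<in> {..<n} \<Longrightarrow> 0 \<le> M i x"
    proof -
      fix x assume "x \<in> {..<n}"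
      then have "M i x \<in> {0,1}" using 0(1) ij by auto
      then show "0 \<le> M i x" by auto
    qed
    have "\<forall>j\<in>{..<n}. M i j = 0"
      using sum_nonneg_eq_0_iff[OF finite_lessThan nn] s0 by simp
    then show "M i j = 0" using ij by auto
  qed
  then show ?case by (intro exI[of _ "\<lambda>s i j. 0"]) simp
next
  case (Suc r)
  obtain f where f: "bij_betw f {..<n} {..<n}" "\<forall>i<n. M i (f i) = 1"
    using regular_has_perm[OF Suc.prems(1-3)] by auto
  define P where "P = (\<lambda>i j. if j = f i then 1 else (0::int))"
  define M' where "M' = (\<lambda>i j. M i j - P i j)"
  have fi: "\<And>i. i < n \<Longrightarrow> f i < n" using f by (auto simp: bij_betw_def)
  have M'01: "\<forall>i<n. \<forall>j<n. M' i j \<in> {0,1}"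
  proof (intro allI impI)
    fix i j assume ij: "i < n" "j < n"
    show "M' i j \<in> {0,1}"
    proof (cases "j = f i")
      case True then show ?thesis using f(2) ij unfolding M'_def P_def by simp
    next
      case False
      have "M i j \<in> {0,1}" using Suc.prems(1) ij by blast
      then show ?thesis using False unfolding M'_def P_def by simp
    qed
  qed
  have Prow: "\<And>i. i < n \<Longrightarrow> (\<Sum>j<n. P i j) = 1"
  proof -
    fix i assume "i < n"
    then show "(\<Sum>j<n. P i j) = 1" unfolding P_def using fi by (simp add: sum.delta)
  qed
  have Pcol: "\<And>j. j < n \<Longrightarrow> (\<Sum>i<n. P i j) = 1"
  proof -
    fix j assume j: "j < n"
    then have "j \<in> f ` {..<n}" using f by (simp add: bij_betw_def)
    then obtain i0 where i0: "i0 < n" "f i0 = j" by auto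
    have injf: "inj_on f {..<n}" using f(1) by (simp add: bij_betw_def)
    have inj: "\<And>i. i < n \<Longrightarrow> f i = j \<Longrightarrow> i = i0"
    proof -
      fix i assume "i < n" "f i = j"
      then have "f i = f i0" using i0 by simp
      then show "i = i0" using injf \<open>i < n\<close> i0(1) by (simp add: inj_on_eq_iff)
    qed
    have "(\<Sum>i<n. P i j) = (\<Sum>i<n. if i = i0 then 1 else 0)"
    proof (rule sum.cong[OF refl])
      fix i assume "i \<in> {..<n}"
      then have iN: "i < n" by simp
      have "j = f i \<longleftrightarrow> i = i0"
      proof
        assume "j = f i"
        then have "f i = j" by simp
        then show "i = i0" using inj iN by blast
      next
        assume "i = i0" then show "j = f i" using i0(2) by simp
      qed
      then show "P i j = (if i = i0 then 1 else 0)" unfolding P_def by simp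
    qed
    then show "(\<Sum>i<n. P i j) = 1" using i0 by (simp add: sum.delta)
  qed
  have M'row: "\<forall>i<n. (\<Sum>j<n. M' i j) = int r"
    using Suc.prems(2) Prow unfolding M'_def by (simp add: sum_subtractf)
  have M'col: "\<forall>j<n. (\<Sum>i<n. M' i j) = int r"
    using Suc.prems(3) Pcol unfolding M'_def by (simp add: sum_subtractf)
  obtain Q' where Q': "\<forall>s<r. is_perm_matrix n (Q' s)" "\<forall>i<n. \<forall>j<n. M' i j = (\<Sum>s<r. Q' s i j)"
    using Suc.IH[OF M'01 M'row M'col] by auto
  define Q where "Q = Q'(r := P)"
  have "\<forall>s<Suc r. is_perm_matrix n (Q s)"
  proof (intro allI impI)
    fix s assume "s < Suc r"
    then consider "s < r" | "s = r" by linarith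
    then show "is_perm_matrix n (Q s)"
    proof cases
      case 1 then show ?thesis using Q'(1) unfolding Q_def by simp
    next
      case 2 then show ?thesis using perm_of_bij[OF f(1)] unfolding Q_def P_def by simp
    qed
  qed
  moreover have "\<forall>i<n. \<forall>j<n. M i j = (\<Sum>s<Suc r. Q s i j)"
  proof (intro allI impI)
    fix i j assume ij: "i < n" "j < n"
    have e1: "(\<Sum>s<Suc r. Q s i j) = (\<Sum>s<r. Q' s i j) + P i j"
      unfolding Q_def by (simp add: sum.lessThan_Suc)
    have e2: "M i j - P i j = (\<Sum>s<r. Q' s i j)" using Q'(2) ij unfolding M'_def by blast
    show "M i j = (\<Sum>s<Suc r. Q s i j)" unfolding e1 using e2 by linarith
  qed
  ultimately show ?case by blast
qed




lemma famA_negD: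
  assumes n: "2 * w + d < n" and dw: "0 < d \<longrightarrow> 0 < w" and ij: "i < n" "j < n"
    and v: "famA n w d i j = -1"
  shows "\<exists>x y. x < n - 1 - w \<and> y < w \<and> \<not> (y = 0 \<and> x < d) \<and> i = 1 + x + y \<and> j + y = w + x"
proof -
  have c: "w \<le> i + j" "i + j + w + 2 \<le> 2 * n" "j \<le> i + w" "i \<le> j + w"
     "\<not> (i + w \<le> j + 1 \<and> i + j \<le> 2 * d + w)" "odd (i + j + w)"
    using v unfolding famA_def by (auto split: if_split_asm)
  have "odd (i + j - w)"
  proof -
    have "i + j + w = (i + j - w) + 2 * w" using c(1) by simp
    then show ?thesis using c(6) by (metis even_shift)
  qed
  then obtain x where x: "i + j - w = 2 * x + 1" by (metis oddE)
  have "odd (i + w - j)"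
  proof -
    have "i + j + w = (i + w - j) + 2 * j" using c(3) by simp
    then show ?thesis using c(6) by (metis even_shift)
  qed
  then obtain y where y: "i + w - j = 2 * y + 1" by (metis oddE)
  have "i = 1 + x + y" using x y c by arith
  moreover have "j + y = w + x" using x y c by arith
  moreover have "y < w" using y c by arith
  moreover have "x < n - 1 - w" using x c by arith
  moreover have "\<not> (y = 0 \<and> x < d)" using x y c(5) by arith
  ultimately show ?thesis by blast
qed


lemma famA_neg_set:
  assumes n: "2 * w + d < n" and dw: "0 < d \<longrightarrow> 0 < w"
  shows "{(i, j). i < n \<and> j < n \<and> famA n w d i j = -1} =
         (\<lambda>(x, y). (1 + x + y, w + x - y)) ` {(x, y). x < n - 1 - w \<and> y < w \<and> \<not> (y = 0 \<and> x < d)}"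
proof (intro equalityI subsetI)
  fix p assume "p \<in> {(i, j). i < n \<and> j < n \<and> famA n w d i j = -1}"
  then obtain i j where p: "p = (i, j)" "i < n" "j < n" "famA n w d i j = -1" by auto
  obtain x y where xy: "x < n - 1 - w" "y < w" "\<not> (y = 0 \<and> x < d)" "i = 1 + x + y" "j + y = w + x"
    using famA_negD[OF n dw p(2,3,4)] by blast
  have "j = w + x - y" using xy by arith
  then show "p \<in> (\<lambda>(x, y). (1 + x + y, w + x - y)) ` {(x, y). x < n - 1 - w \<and> y < w \<and> \<not> (y = 0 \<and> x < d)}"
    using xy p by auto
next
  fix p assume "p \<in> (\<lambda>(x, y). (1 + x + y, w + x - y)) ` {(x, y). x < n - 1 - w \<and> y < w \<and> \<not> (y = 0 \<and> x < d)}"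
  then obtain x y where xy: "x < n - 1 - w" "y < w" "\<not> (y = 0 \<and> x < d)" "p = (1 + x + y, w + x - y)" by auto
  define i where "i = 1 + x + y"
  define j where "j = w + x - y"
  have ij: "i < n" "j < n" using xy n unfolding i_def j_def by arith+
  have par: "odd (i + j + w)"
  proof -
    have "i + j + w = 2 * (x + w) + 1" using xy unfolding i_def j_def by arith
    then show ?thesis by simp
  qed
  have c: "w \<le> i + j" "i + j + w + 2 \<le> 2 * n" "j \<le> i + w" "i \<le> j + w"
     "\<not> (i + w \<le> j + 1 \<and> i + j \<le> 2 * d + w)" "i \<noteq> 0"
    using xy n unfolding i_def j_def by arith+
  have "famA n w d i j = -1" using c par unfolding famA_def by simp
  then show "p \<in> {(i, j). i < n \<and> j < n \<and> famA n w d i j = -1}"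
    using ij xy(4) unfolding i_def j_def by auto
qed

lemma famA_count:
  assumes n: "2 * w + d < n" and dw: "0 < d \<longrightarrow> 0 < w"
  shows "num_neg_ones n (famA n w d) = w * (n - 1 - w) - d"
proof -
  define S where "S = {(x, y). x < n - 1 - w \<and> y < w \<and> \<not> (y = 0 \<and> x < d)}"
  have inj: "inj_on (\<lambda>(x, y). (1 + x + y, w + x - y)) S"
    unfolding S_def by (rule inj_onI) auto
  have S: "S = ({..<n - 1 - w} \<times> {..<w}) - ({..<d} \<times> {0})" unfolding S_def by auto
  have sub: "{..<d} \<times> {0::nat} \<subseteq> {..<n - 1 - w} \<times> {..<w}"
  proof (cases "d = 0")
    case True then show ?thesis by simp
  next
    case False then have "0 < w" using dw by simp
    then show ?thesis using n by auto
  qed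
  have "card S = (n - 1 - w) * w - d"
    unfolding S using sub by (simp add: card_Diff_subset card_cartesian_product)
  then show ?thesis
    unfolding num_neg_ones_def famA_neg_set[OF n dw, folded S_def]
    using inj by (simp add: card_image mult.commute)
qed

lemma famA_pos_res:
  assumes ij: "i < n" "j < n" and v: "famA n w d i j = 1"
  shows "(i = 0 \<and> j = w + d) \<or> (\<exists>y\<le>w. int i - int j = 2 * int y - int w)"
proof (cases "i = 0 \<and> j = w + d")
  case True then show ?thesis by simp
next
  case False
  then have c: "j \<le> i + w" "i \<le> j + w" "even (i + j + w)"
    using v unfolding famA_def by (auto split: if_split_asm)
  have "even (i + w - j)"
  proof -
    have "i + j + w = (i + w - j) + 2 * j" using c(1) by simp
    then show ?thesis using c(3) by (metis even_shift)
  qed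
  then obtain y where y: "i + w - j = 2 * y" by (metis evenE)
  have "y \<le> w" using y c by arith
  moreover have "int i - int j = 2 * int y - int w" using y c by arith
  ultimately show ?thesis by blast
qed

lemma famA_neg_res:
  assumes n: "2 * w + d < n" and dw: "0 < d \<longrightarrow> 0 < w" and ij: "i < n" "j < n"
    and v: "famA n w d i j = -1"
  shows "\<exists>y<w. int i - int j = 1 + 2 * int y - int w"
proof -
  obtain x y where xy: "x < n - 1 - w" "y < w" "i = 1 + x + y" "j + y = w + x"
    using famA_negD[OF n dw ij v] by blast
  then have "int i - int j = 1 + 2 * int y - int w" by arith
  then show ?thesis using xy by blast
qed




lemma dvd_small_int: "int n dvd (z::int) \<Longrightarrow> \<bar>z\<bar> < int n \<Longrightarrow> z = 0"
proof (rule ccontr)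
  assume a: "int n dvd z" "\<bar>z\<bar> < int n" "z \<noteq> 0"
  then have "\<bar>int n\<bar> \<le> \<bar>z\<bar>" using dvd_imp_le_int by blast
  then show False using a(2) by simp
qed

lemma res_inj:
  assumes "j < n" "j' < n" "(int i - int j) mod int n = (int i - int j') mod int n"
  shows "j = j'"
proof -
  have "int n dvd (int i - int j) - (int i - int j')" using assms(3) by (simp add: mod_eq_dvd_iff)
  then have "int n dvd (int j' - int j)" by simp
  moreover have "\<bar>int j' - int j\<bar> < int n" using assms(1,2) by arith
  ultimately have "int j' - int j = 0" by (rule dvd_small_int)
  then show ?thesis by simp
qed

lemma res_inj2:
  assumes "i < n" "i' < n" "(int i - int j) mod int n = (int i' - int j) mod int n"
  shows "i = i'"
proof -
  have "int n dvd (int i - int j) - (int i' - int j)" using assms(3) by (simp add: mod_eq_dvd_iff)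
  then have "int n dvd (int i - int i')" by simp
  moreover have "\<bar>int i - int i'\<bar> < int n" using assms(1,2) by arith
  ultimately have "int i - int i' = 0" by (rule dvd_small_int)
  then show ?thesis by simp
qed

lemma image_full:
  fixes f :: "nat \<Rightarrow> int"
  assumes "inj_on f {..<n}" "f ` {..<n} \<subseteq> {0..<int n}"
  shows "f ` {..<n} = {0..<int n}"
proof -
  have "card (f ` {..<n}) = card {0..<int n}" using assms(1) by (simp add: card_image)
  then show ?thesis using assms(2) by (simp add: card_subset_eq)
qed

lemma count_pre:
  fixes f :: "nat \<Rightarrow> int"
  assumes "inj_on f {..<n}" "f ` {..<n} = {0..<int n}" "R \<subseteq> {0..<int n}"
  shows "card {x\<in>{..<n}. f x \<in> R} = card R"
proof -
  have "f ` {x\<in>{..<n}. f x \<in> R} = R"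
  proof (intro equalityI subsetI)
    fix r assume "r \<in> f ` {x\<in>{..<n}. f x \<in> R}" then show "r \<in> R" by auto
  next
    fix r assume r: "r \<in> R"
    then have "r \<in> f ` {..<n}" using assms(2,3) by auto
    then obtain x where "x < n" "r = f x" by auto
    then show "r \<in> f ` {x\<in>{..<n}. f x \<in> R}" using r by auto
  qed
  moreover have "inj_on f {x\<in>{..<n}. f x \<in> R}" using assms(1) by (rule inj_on_subset) auto
  ultimately show ?thesis by (metis card_image)
qed

lemma circ_M:
  fixes A :: "nat \<Rightarrow> nat \<Rightarrow> int" and X Y :: "int set"
  assumes n: "0 < n" and XY: "X \<inter> Y = {}" and fX: "finite X" and fY: "finite Y"
    and Xs: "X \<subseteq> {0..<int n}" and Ys: "Y \<subseteq> {0..<int n}"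
    and cX: "card X \<le> a" and cY: "card Y + a \<le> n"
    and negX: "\<forall>i<n. \<forall>j<n. A i j = -1 \<longrightarrow> (int i - int j) mod int n \<in> X"
    and posY: "\<forall>i<n. \<forall>j<n. A i j = 1 \<longrightarrow> (int i - int j) mod int n \<in> Y"
  shows "\<exists>M. (\<forall>i<n. \<forall>j<n. M i j \<in> {0,1}) \<and> (\<forall>i<n. (\<Sum>j<n. M i j) = int a)
     \<and> (\<forall>j<n. (\<Sum>i<n. M i j) = int a)
     \<and> (\<forall>i<n. \<forall>j<n. A i j = -1 \<longrightarrow> M i j = 1) \<and> (\<forall>i<n. \<forall>j<n. A i j = 1 \<longrightarrow> M i j = 0)"
proof -
  define Z where "Z = {0..<int n} - (X \<union> Y)"
  have cXY: "card (X \<union> Y) = card X + card Y" using XY fX fY by (simp add: card_Un_disjoint)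
  have cZ: "card Z = n - (card X + card Y)" unfolding Z_def using Xs Ys cXY fX fY
    by (subst card_Diff_subset) auto
  have "a - card X \<le> card Z" using cZ cY cX by simp
  then obtain E where E: "E \<subseteq> Z" "card E = a - card X" "finite E" by (rule obtain_subset_with_card_n)
  define R where "R = X \<union> E"
  have XE: "X \<inter> E = {}" using E unfolding Z_def by auto
  have cR: "card R = a" unfolding R_def using XE fX E cX by (simp add: card_Un_disjoint)
  have Rs: "R \<subseteq> {0..<int n}" unfolding R_def using Xs E unfolding Z_def by auto
  have RY: "R \<inter> Y = {}" unfolding R_def using XY E unfolding Z_def by auto
  define M where "M i j = (of_bool ((int i - int j) mod int n \<in> R) :: int)" for i j
  have row: "\<forall>i<n. (\<Sum>j<n. M i j) = int a"
  proof (intro allI impI)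
    fix i assume "i < n"
    define f where "f j = (int i - int j) mod int n" for j
    have inj: "inj_on f {..<n}" unfolding f_def by (rule inj_onI) (auto intro: res_inj)
    have sub: "f ` {..<n} \<subseteq> {0..<int n}" unfolding f_def using n by auto
    have "card {x\<in>{..<n}. f x \<in> R} = card R" using count_pre[OF inj image_full[OF inj sub] Rs] .
    moreover have "(\<Sum>j<n. M i j) = int (card ({..<n} \<inter> {x. f x \<in> R}))"
      unfolding M_def f_def by simp
    moreover have "{..<n} \<inter> {x. f x \<in> R} = {x\<in>{..<n}. f x \<in> R}" by auto
    ultimately show "(\<Sum>j<n. M i j) = int a" using cR by simp
  qed
  have col: "\<forall>j<n. (\<Sum>i<n. M i j) = int a"
  proof (intro allI impI)
    fix j assume "j < n"
    define f where "f i = (int i - int j) mod int n" for i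
    have inj: "inj_on f {..<n}" unfolding f_def by (rule inj_onI) (auto intro: res_inj2)
    have sub: "f ` {..<n} \<subseteq> {0..<int n}" unfolding f_def using n by auto
    have "card {x\<in>{..<n}. f x \<in> R} = card R" using count_pre[OF inj image_full[OF inj sub] Rs] .
    moreover have "(\<Sum>i<n. M i j) = int (card ({..<n} \<inter> {x. f x \<in> R}))"
      unfolding M_def f_def by simp
    moreover have "{..<n} \<inter> {x. f x \<in> R} = {x\<in>{..<n}. f x \<in> R}" by auto
    ultimately show "(\<Sum>i<n. M i j) = int a" using cR by simp
  qed
  have "\<forall>i<n. \<forall>j<n. M i j \<in> {0,1}" unfolding M_def by auto
  moreover have "\<forall>i<n. \<forall>j<n. A i j = -1 \<longrightarrow> M i j = 1" using negX unfolding M_def R_def by auto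
  moreover have "\<forall>i<n. \<forall>j<n. A i j = 1 \<longrightarrow> M i j = 0" using posY RY unfolding M_def by auto
  ultimately show ?thesis using row col by blast
qed


lemma choose_w:
  fixes n a t :: nat
  assumes a: "2 * a < n" and t: "t \<le> a * (n - 1 - a)"
  obtains w d where "w \<le> a" "2 * w + d < n" "0 < d \<longrightarrow> 0 < w" "t = w * (n - 1 - w) - d"
proof -
  define w where "w = (LEAST w. t \<le> w * (n - 1 - w))"
  have tw: "t \<le> w * (n - 1 - w)" unfolding w_def by (rule LeastI[of _ a]) (rule t)
  have wa: "w \<le> a" unfolding w_def by (rule Least_le) (rule t)
  define d where "d = w * (n - 1 - w) - t"
  have td: "t = w * (n - 1 - w) - d" using tw unfolding d_def by simp
  show ?thesis
  proof (cases "w = 0")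
    case True
    then have "d = 0" unfolding d_def by simp
    then show ?thesis using that[of w d] True wa td a by simp
  next
    case False
    have "\<not> t \<le> (w - 1) * (n - 1 - (w - 1))"
    proof
      assume "t \<le> (w - 1) * (n - 1 - (w - 1))"
      then have "w \<le> w - 1" unfolding w_def by (rule Least_le)
      then show False using False by simp
    qed
    then have lt: "(w - 1) * (n - 1 - (w - 1)) < t" by simp
    have wn: "2 * w < n" using wa a by simp
    define W where "W = int w"
    define N where "N = int n"
    have e1: "int ((w - 1) * (n - 1 - (w - 1))) = (W - 1) * (N - W)"
      using False wn unfolding W_def N_def by (simp add: of_nat_diff)
    have e2: "int (w * (n - 1 - w)) = W * (N - 1 - W)"
      using wn unfolding W_def N_def by (simp add: of_nat_diff)
    have "int d = W * (N - 1 - W) - int t" using tw e2 unfolding d_def by (simp add: of_nat_diff)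
    moreover have "(W - 1) * (N - W) < int t" using lt e1 by linarith
    moreover have "(W - 1) * (N - W) = W * (N - 1 - W) + 2 * W - N" by (simp add: algebra_simps)
    ultimately have "int d + 2 * W < N" by linarith
    then have "2 * w + d < n" unfolding W_def N_def by simp
    then show ?thesis using that[of w d] False wa td by simp
  qed
qed

lemma famA_M:
  assumes n: "2 * w + d < n" and dw: "0 < d \<longrightarrow> 0 < w" and wa: "w \<le> a" and a: "2 * a < n"
  shows "\<exists>M. (\<forall>i<n. \<forall>j<n. M i j \<in> {0,1}) \<and> (\<forall>i<n. (\<Sum>j<n. M i j) = int a)
     \<and> (\<forall>j<n. (\<Sum>i<n. M i j) = int a)
     \<and> (\<forall>i<n. \<forall>j<n. famA n w d i j = -1 \<longrightarrow> M i j = 1) \<and> (\<forall>i<n. \<forall>j<n. famA n w d i j = 1 \<longrightarrow> M i j = 0)"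
proof -
  define X where "X = (\<lambda>y. (1 + 2 * int y - int w) mod int n) ` {..<w}"
  define Y0 where "Y0 = (\<lambda>y. (2 * int y - int w) mod int n) ` {..w}"
  define Y where "Y = insert ((- int (w + d)) mod int n) Y0"
  have n0: "0 < n" using n by simp
  have negX: "\<forall>i<n. \<forall>j<n. famA n w d i j = -1 \<longrightarrow> (int i - int j) mod int n \<in> X"
  proof (intro allI impI)
    fix i j assume "i < n" "j < n" "famA n w d i j = -1"
    then obtain y where "y < w" "int i - int j = 1 + 2 * int y - int w" using famA_neg_res[OF n dw] by blast
    then show "(int i - int j) mod int n \<in> X" unfolding X_def by auto
  qed
  have posY: "\<forall>i<n. \<forall>j<n. famA n w d i j = 1 \<longrightarrow> (int i - int j) mod int n \<in> Y"
  proof (intro allI impI)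
    fix i j assume ij: "i < n" "j < n" "famA n w d i j = 1"
    from famA_pos_res[OF ij] show "(int i - int j) mod int n \<in> Y"
    proof
      assume "i = 0 \<and> j = w + d" then show ?thesis unfolding Y_def by simp
    next
      assume "\<exists>y\<le>w. int i - int j = 2 * int y - int w"
      then obtain y where "y \<le> w" "int i - int j = 2 * int y - int w" by blast
      then show ?thesis unfolding Y_def Y0_def by auto
    qed
  qed
  have disj: "X \<inter> Y = {}"
  proof (rule ccontr)
    assume "X \<inter> Y \<noteq> {}"
    then obtain r where r: "r \<in> X" "r \<in> Y" by blast
    from r(1) obtain y where y: "y < w" "r = (1 + 2 * int y - int w) mod int n" unfolding X_def by auto
    from r(2) consider "r = (- int (w + d)) mod int n" | "r \<in> Y0" unfolding Y_def by auto
    then show False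
    proof cases
      case 1
      then have "int n dvd (1 + 2 * int y - int w) - (- int (w + d))" using y by (simp add: mod_eq_dvd_iff)
      moreover have "\<bar>(1 + 2 * int y - int w) - (- int (w + d))\<bar> < int n" using y n by simp
      ultimately have "(1 + 2 * int y - int w) - (- int (w + d)) = 0" by (rule dvd_small_int)
      then show False by simp
    next
      case 2
      then obtain y' where y': "y' \<le> w" "r = (2 * int y' - int w) mod int n" unfolding Y0_def by auto
      then have "int n dvd (1 + 2 * int y - int w) - (2 * int y' - int w)" using y by (simp add: mod_eq_dvd_iff)
      moreover have "\<bar>(1 + 2 * int y - int w) - (2 * int y' - int w)\<bar> < int n" using y y' n by simp
      ultimately have "(1 + 2 * int y - int w) - (2 * int y' - int w) = 0" by (rule dvd_small_int)
      then have "1 + 2 * int y = 2 * int y'" by simp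
      then show False by presburger
    qed
  qed
  have fX: "finite X" "finite Y" unfolding X_def Y_def Y0_def by auto
  have Xs: "X \<subseteq> {0..<int n}" "Y \<subseteq> {0..<int n}" unfolding X_def Y_def Y0_def using n0 by auto
  have cX: "card X \<le> a" unfolding X_def using wa by (metis card_image_le card_lessThan finite_lessThan le_trans)
  have cY0: "card Y0 \<le> Suc w" unfolding Y0_def by (metis card_atMost card_image_le finite_atMost)
  have cY: "card Y + a \<le> n"
  proof (cases "d = 0")
    case True
    then have "(- int (w + d)) mod int n \<in> Y0" unfolding Y0_def by (auto intro!: image_eqI[where x=0])
    then have "card Y = card Y0" unfolding Y_def by (simp add: insert_absorb)
    then show ?thesis using cY0 wa a by simp
  next
    case False
    have "card Y \<le> Suc (card Y0)" unfolding Y_def by (rule card_insert_le_m1) auto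
    then show ?thesis using cY0 wa a n False by linarith
  qed
  show ?thesis by (rule circ_M[OF n0 disj fX Xs cX cY negX posY])
qed


lemma sum_list_map_upt_sum: "sum_list (map f [0..<n]) = (\<Sum>j<n. f j)"
  by (simp add: sum_set_upt_conv_sum_list_nat[symmetric] atLeast0LessThan)

lemma ASM_row_sum:
  assumes "is_ASM n A" "i < n" shows "(\<Sum>j<n. A i j) = 1"
proof -
  have "alt_sign_seq (map (\<lambda>j. A i j) [0..<n])" using assms unfolding is_ASM_def by auto
  then have "sum_list (map (\<lambda>j. A i j) [0..<n]) = 1" by (rule alt_sum_list)
  then show ?thesis by (simp add: sum_list_map_upt_sum)
qed

lemma ASM_col_sum:
  assumes "is_ASM n A" "j < n" shows "(\<Sum>i<n. A i j) = 1"
proof -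
  have "alt_sign_seq (map (\<lambda>i. A i j) [0..<n])" using assms unfolding is_ASM_def by auto
  then have "sum_list (map (\<lambda>i. A i j) [0..<n]) = 1" by (rule alt_sum_list)
  then show ?thesis by (simp add: sum_list_map_upt_sum)
qed

lemma perm_row_alt:
  assumes P: "is_perm_matrix n P" and i: "i < n"
  shows "alt_sign_seq (map (\<lambda>j. P i j) [0..<n])"
proof -
  have "card {j. j < n \<and> P i j = 1} = 1" using P i unfolding is_perm_matrix_def by auto
  then obtain j0 where j0: "{j. j < n \<and> P i j = 1} = {j0}" by (rule card_1_singletonE)
  have j0n: "j0 < n" using j0 by auto
  have "\<And>j. j < n \<Longrightarrow> P i j = (if j0 \<le> j \<and> j \<le> j0 then (if even (j + j0) then 1 else -1) else 0)"
  proof -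
    fix j assume j: "j < n"
    show "P i j = (if j0 \<le> j \<and> j \<le> j0 then (if even (j + j0) then 1 else -1) else 0)"
    proof (cases "j = j0")
      case True then show ?thesis using j0 by auto
    next
      case False
      then have "P i j \<noteq> 1" using j0 j by auto
      moreover have "P i j \<in> {0,1}" using P i j unfolding is_perm_matrix_def by auto
      ultimately show ?thesis using False by auto
    qed
  qed
  then show ?thesis by (intro alt_interval[where lo=j0 and hi=j0]) (use j0n in auto)
qed

lemma perm_col_alt:
  assumes P: "is_perm_matrix n P" and j: "j < n"
  shows "alt_sign_seq (map (\<lambda>i. P i j) [0..<n])"
proof -
  have "card {i. i < n \<and> P i j = 1} = 1" using P j unfolding is_perm_matrix_def by auto
  then obtain i0 where i0: "{i. i < n \<and> P i j = 1} = {i0}" by (rule card_1_singletonE)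
  have i0n: "i0 < n" using i0 by auto
  have "\<And>i. i < n \<Longrightarrow> P i j = (if i0 \<le> i \<and> i \<le> i0 then (if even (i + i0) then 1 else -1) else 0)"
  proof -
    fix i assume i: "i < n"
    show "P i j = (if i0 \<le> i \<and> i \<le> i0 then (if even (i + i0) then 1 else -1) else 0)"
    proof (cases "i = i0")
      case True then show ?thesis using i0 by auto
    next
      case False
      then have "P i j \<noteq> 1" using i0 i by auto
      moreover have "P i j \<in> {0,1}" using P i j unfolding is_perm_matrix_def by auto
      ultimately show ?thesis using False by auto
    qed
  qed
  then show ?thesis by (intro alt_interval[where lo=i0 and hi=i0]) (use i0n in auto)
qed


lemma alt_one: "filter (\<lambda>x. x \<noteq> 0) xs = [1] \<Longrightarrow> alt_sign_seq xs"
  by (rule alt_sign_seq_filterI[where ys="[1]"]) auto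

lemma alt_three: "filter (\<lambda>x. x \<noteq> 0) xs = [1, -1, 1] \<Longrightarrow> alt_sign_seq xs"
  by (rule alt_sign_seq_filterI[where ys="[1, -1, 1]"]) (auto simp: less_Suc_eq nth_Cons')

lemma assemble:
  fixes n k t :: nat and A L :: "nat \<Rightarrow> nat \<Rightarrow> int"
  assumes k: "1 \<le> k" "k \<le> n" and ASM: "is_ASM n A" and cnt: "num_neg_ones n A = t"
    and L01: "\<forall>i<n. \<forall>j<n. L i j \<in> {0,1}" and Lrow: "\<forall>i<n. (\<Sum>j<n. L i j) = int (k - 1)"
    and Lcol: "\<forall>j<n. (\<Sum>i<n. L i j) = int (k - 1)"
    and neg: "\<forall>i<n. \<forall>j<n. A i j = -1 \<longrightarrow> L i j = 1"
    and pos: "\<forall>i<n. \<forall>j<n. A i j = 1 \<longrightarrow> L i j = 0"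
  shows "\<exists>(A :: nat \<Rightarrow> nat \<Rightarrow> int) (P :: nat \<Rightarrow> nat \<Rightarrow> nat \<Rightarrow> int).
           is_ASM n A \<and> num_neg_ones n A = t \<and>
           (\<forall>s < n. s \<noteq> k - 1 \<longrightarrow> is_perm_matrix n (P s)) \<and>
           is_ASHM n (\<lambda>s. if s = k - 1 then A else P s)"
proof -
  define U where "U i j = 1 - A i j - L i j" for i j
  have Aent: "\<forall>i<n. \<forall>j<n. A i j \<in> {-1,0,1}" using ASM unfolding is_ASM_def by auto
  have U01: "\<forall>i<n. \<forall>j<n. U i j \<in> {0,1}"
  proof (intro allI impI)
    fix i j assume ij: "i < n" "j < n"
    have "A i j \<in> {-1,0,1}" "L i j \<in> {0,1}" using Aent L01 ij by auto
    then show "U i j \<in> {0,1}" using neg pos ij unfolding U_def by auto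
  qed
  have Urow: "\<forall>i<n. (\<Sum>j<n. U i j) = int (n - k)"
  proof (intro allI impI)
    fix i assume i: "i < n"
    have "(\<Sum>j<n. U i j) = (\<Sum>j<n. 1) - (\<Sum>j<n. A i j) - (\<Sum>j<n. L i j)"
      unfolding U_def by (simp add: sum_subtractf)
    also have "\<dots> = int n - 1 - int (k - 1)" using ASM_row_sum[OF ASM i] Lrow i by simp
    finally show "(\<Sum>j<n. U i j) = int (n - k)" using k by simp
  qed
  have Ucol: "\<forall>j<n. (\<Sum>i<n. U i j) = int (n - k)"
  proof (intro allI impI)
    fix j assume j: "j < n"
    have "(\<Sum>i<n. U i j) = (\<Sum>i<n. 1) - (\<Sum>i<n. A i j) - (\<Sum>i<n. L i j)"
      unfolding U_def by (simp add: sum_subtractf)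
    also have "\<dots> = int n - 1 - int (k - 1)" using ASM_col_sum[OF ASM j] Lcol j by simp
    finally show "(\<Sum>i<n. U i j) = int (n - k)" using k by simp
  qed
  obtain QL where QL: "\<forall>s<k-1. is_perm_matrix n (QL s)" "\<forall>i<n. \<forall>j<n. L i j = (\<Sum>s<k-1. QL s i j)"
    using birkhoff[OF L01 Lrow Lcol] by blast
  obtain QU where QU: "\<forall>s<n-k. is_perm_matrix n (QU s)" "\<forall>i<n. \<forall>j<n. U i j = (\<Sum>s<n-k. QU s i j)"
    using birkhoff[OF U01 Urow Ucol] by blast
  define P where "P s = (if s < k - 1 then QL s else QU (s - k))" for s
  define H where "H s = (if s = k - 1 then A else P s)" for s
  have perms: "\<forall>s < n. s \<noteq> k - 1 \<longrightarrow> is_perm_matrix n (P s)"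
  proof (intro allI impI)
    fix s assume s: "s < n" "s \<noteq> k - 1"
    show "is_perm_matrix n (P s)"
    proof (cases "s < k - 1")
      case True then show ?thesis using QL(1) unfolding P_def by simp
    next
      case False
      then have "s - k < n - k" using s k by arith
      then show ?thesis using QU(1) False unfolding P_def by simp
    qed
  qed
  have QLent: "\<And>s i j. s < k - 1 \<Longrightarrow> i < n \<Longrightarrow> j < n \<Longrightarrow> QL s i j \<in> {0,1}"
    using QL(1) unfolding is_perm_matrix_def by blast
  have QUent: "\<And>s i j. s < n - k \<Longrightarrow> i < n \<Longrightarrow> j < n \<Longrightarrow> QU s i j \<in> {0,1}"
    using QU(1) unfolding is_perm_matrix_def by blast
  have vert: "\<forall>i<n. \<forall>j<n. alt_sign_seq (map (\<lambda>s. H s i j) [0..<n])"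
  proof (intro allI impI)
    fix i j assume ij: "i < n" "j < n"
    have sp1: "[0..<n] = [0..<k-1] @ [k-1..<n]" using upt_add_eq_append[of 0 "k-1" "n-(k-1)"] k by simp
    have sp2: "[k-1..<n] = (k-1) # [k..<n]" using k by (simp add: upt_conv_Cons)
    have sp3: "[k..<n] = map (\<lambda>s. s + k) [0..<n-k]" using k by (simp add: map_add_upt)
    have m1: "map (\<lambda>s. H s i j) [0..<k-1] = map (\<lambda>s. QL s i j) [0..<k-1]"
      unfolding H_def P_def by (intro map_cong) auto
    have m3: "map (\<lambda>s. H s i j) [k..<n] = map (\<lambda>s. QU s i j) [0..<n-k]"
      unfolding sp3 H_def P_def using k by auto
    have whole: "map (\<lambda>s. H s i j) [0..<n] = map (\<lambda>s. QL s i j) [0..<k-1] @ [A i j] @ map (\<lambda>s. QU s i j) [0..<n-k]"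
      unfolding sp1 sp2 using m1 m3 unfolding H_def by simp
    have f1: "filter (\<lambda>x. x \<noteq> 0) (map (\<lambda>s. QL s i j) [0..<k-1]) = replicate (nat (L i j)) 1"
    proof -
      have "set (map (\<lambda>s. QL s i j) [0..<k-1]) \<subseteq> {0,1}"
      proof
        fix x assume "x \<in> set (map (\<lambda>s. QL s i j) [0..<k-1])"
        then obtain s where "s < k - 1" "x = QL s i j" by auto
        then show "x \<in> {0,1}" using QLent ij by blast
      qed
      moreover have "sum_list (map (\<lambda>s. QL s i j) [0..<k-1]) = L i j"
        using QL(2) ij by (simp add: sum_list_map_upt_sum)
      ultimately show ?thesis using filter_nz_01 by metis
    qed
    have f3: "filter (\<lambda>x. x \<noteq> 0) (map (\<lambda>s. QU s i j) [0..<n-k]) = replicate (nat (U i j)) 1"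
    proof -
      have "set (map (\<lambda>s. QU s i j) [0..<n-k]) \<subseteq> {0,1}"
      proof
        fix x assume "x \<in> set (map (\<lambda>s. QU s i j) [0..<n-k])"
        then obtain s where "s < n - k" "x = QU s i j" by auto
        then show "x \<in> {0,1}" using QUent ij by blast
      qed
      moreover have "sum_list (map (\<lambda>s. QU s i j) [0..<n-k]) = U i j"
        using QU(2) ij by (simp add: sum_list_map_upt_sum)
      ultimately show ?thesis using filter_nz_01 by metis
    qed
    have F: "filter (\<lambda>x. x \<noteq> 0) (map (\<lambda>s. H s i j) [0..<n]) =
      replicate (nat (L i j)) 1 @ filter (\<lambda>x. x \<noteq> 0) [A i j] @ replicate (nat (U i j)) 1"
      unfolding whole using f1 f3 by simp
    have Aij: "A i j \<in> {-1,0,1}" "L i j \<in> {0,1}" using Aent L01 ij by auto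
    consider "A i j = -1" | "A i j = 1" | "A i j = 0" using Aij by auto
    then show "alt_sign_seq (map (\<lambda>s. H s i j) [0..<n])"
    proof cases
      case 1
      then have "L i j = 1" "U i j = 1" using neg ij unfolding U_def by auto
      then show ?thesis using F 1 by (intro alt_three) simp
    next
      case 2
      then have "L i j = 0" "U i j = 0" using pos ij unfolding U_def by auto
      then show ?thesis using F 2 by (intro alt_one) simp
    next
      case 3
      then have "(L i j = 1 \<and> U i j = 0) \<or> (L i j = 0 \<and> U i j = 1)" using Aij unfolding U_def by auto
      then show ?thesis using F 3 by (auto intro!: alt_one)
    qed
  qed
  have "is_ASHM n H"
    unfolding is_ASHM_def
  proof (intro conjI allI impI)
    fix s i j assume "s < n" "i < n" "j < n"
    then show "H s i j \<in> {-1,0,1}" using Aent perms unfolding H_def is_perm_matrix_def by auto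
  next
    fix s i assume si: "s < n" "i < n"
    show "alt_sign_seq (map (\<lambda>j. H s i j) [0..<n])"
    proof (cases "s = k - 1")
      case True then show ?thesis using ASM si unfolding H_def is_ASM_def by simp
    next
      case False then show ?thesis using perm_row_alt perms si unfolding H_def by simp
    qed
  next
    fix s j assume sj: "s < n" "j < n"
    show "alt_sign_seq (map (\<lambda>i. H s i j) [0..<n])"
    proof (cases "s = k - 1")
      case True then show ?thesis using ASM sj unfolding H_def is_ASM_def by simp
    next
      case False then show ?thesis using perm_col_alt perms sj unfolding H_def by simp
    qed
  next
    fix i j assume "i < n" "j < n"
    then show "alt_sign_seq (map (\<lambda>s. H s i j) [0..<n])" using vert by blast
  qed
  then show ?thesis using ASM cnt perms unfolding H_def by blast
qed


theorem mainTheorem13: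
  fixes n k t :: nat
  assumes "1 \<le> k" and "k \<le> n" and "t \<le> (k - 1) * (n - k)"
  shows "\<exists>(A :: nat \<Rightarrow> nat \<Rightarrow> int) (P :: nat \<Rightarrow> nat \<Rightarrow> nat \<Rightarrow> int).
           is_ASM n A \<and> num_neg_ones n A = t \<and>
           (\<forall>s < n. s \<noteq> k - 1 \<longrightarrow> is_perm_matrix n (P s)) \<and>
           is_ASHM n (\<lambda>s. if s = k - 1 then A else P s)"
proof -
  define a where "a = min (k - 1) (n - k)"
  have a2: "2 * a < n" unfolding a_def using assms(1,2) by auto
  have ta: "t \<le> a * (n - 1 - a)"
  proof (cases "k - 1 \<le> n - k")
    case True
    then have "a = k - 1" unfolding a_def by simp
    moreover have "n - 1 - (k - 1) = n - k" using assms(1,2) by simp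
    ultimately show ?thesis using assms(3) by simp
  next
    case False
    then have "a = n - k" unfolding a_def by simp
    moreover have "n - 1 - (n - k) = k - 1" using assms(1,2) by simp
    ultimately show ?thesis using assms(3) by (simp add: mult.commute)
  qed
  obtain w d where wd: "w \<le> a" "2 * w + d < n" "0 < d \<longrightarrow> 0 < w" "t = w * (n - 1 - w) - d"
    using choose_w[OF a2 ta] by blast
  define A where "A = famA n w d"
  have ASM: "is_ASM n A" unfolding A_def by (rule famA_ASM[OF wd(2,3)])
  have cnt: "num_neg_ones n A = t" unfolding A_def using famA_count[OF wd(2,3)] wd(4) by simp
  obtain M where M: "\<forall>i<n. \<forall>j<n. M i j \<in> {0,1}" "\<forall>i<n. (\<Sum>j<n. M i j) = int a"
     "\<forall>j<n. (\<Sum>i<n. M i j) = int a"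
     "\<forall>i<n. \<forall>j<n. A i j = -1 \<longrightarrow> M i j = 1" "\<forall>i<n. \<forall>j<n. A i j = 1 \<longrightarrow> M i j = 0"
    using famA_M[OF wd(2,3,1) a2] unfolding A_def by blast
  show ?thesis
  proof (cases "a = k - 1")
    case True
    show ?thesis by (rule assemble[OF assms(1,2) ASM cnt M(1)]) (use M True in auto)
  next
    case False
    then have an: "a = n - k" unfolding a_def by auto
    define L where "L i j = 1 - A i j - M i j" for i j
    have Aent: "\<forall>i<n. \<forall>j<n. A i j \<in> {-1,0,1}" using ASM unfolding is_ASM_def by auto
    have L01: "\<forall>i<n. \<forall>j<n. L i j \<in> {0,1}"
    proof (intro allI impI)
      fix i j assume ij: "i < n" "j < n"
      have "A i j \<in> {-1,0,1}" "M i j \<in> {0,1}" using Aent M(1) ij by auto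
      then show "L i j \<in> {0,1}" using M(4,5) ij unfolding L_def by auto
    qed
    have Lrow: "\<forall>i<n. (\<Sum>j<n. L i j) = int (k - 1)"
    proof (intro allI impI)
      fix i assume i: "i < n"
      have "(\<Sum>j<n. L i j) = (\<Sum>j<n. 1) - (\<Sum>j<n. A i j) - (\<Sum>j<n. M i j)"
        unfolding L_def by (simp add: sum_subtractf)
      also have "\<dots> = int n - 1 - int (n - k)" using ASM_row_sum[OF ASM i] M(2) i an by simp
      finally show "(\<Sum>j<n. L i j) = int (k - 1)" using assms(1,2) by simp
    qed
    have Lcol: "\<forall>j<n. (\<Sum>i<n. L i j) = int (k - 1)"
    proof (intro allI impI)
      fix j assume j: "j < n"
      have "(\<Sum>i<n. L i j) = (\<Sum>i<n. 1) - (\<Sum>i<n. A i j) - (\<Sum>i<n. M i j)"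
        unfolding L_def by (simp add: sum_subtractf)
      also have "\<dots> = int n - 1 - int (n - k)" using ASM_col_sum[OF ASM j] M(3) j an by simp
      finally show "(\<Sum>i<n. L i j) = int (k - 1)" using assms(1,2) by simp
    qed
    have neg: "\<forall>i<n. \<forall>j<n. A i j = -1 \<longrightarrow> L i j = 1" using M(4) unfolding L_def by auto
    have pos: "\<forall>i<n. \<forall>j<n. A i j = 1 \<longrightarrow> L i j = 0" using M(5) unfolding L_def by auto
    show ?thesis by (rule assemble[OF assms(1,2) ASM cnt L01 Lrow Lcol neg pos])
  qed
qed


end
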